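(* Let $F$ be a field, $V$ a nonzero vector space over $F$, $\Gamma$ a nonempty set, $\varphi:\Gamma\to\Gamma$ a map and $\mathfrak{w}=(\mathfrak{w}_\alpha)_{\alpha\in\Gamma}\in F^\Gamma$. Let $\sigma_{\varphi,\mathfrak{w}}:V^\Gamma\to V^\Gamma$, $(x_\alpha)_{\alpha\in\Gamma}\mapsto(\mathfrak{w}_\alpha x_{\varphi(\alpha)})_{\alpha\in\Gamma}$. Put \[\mathsf{M}:=\Big\{r\in F\setminus\{0\}: \exists\theta\in P(\varphi)\setminus\downarrow\mathfrak{Z}\ \ \prod_{0\leq i<per(\theta)} \mathfrak{w}_{\varphi^{i}(\theta)}=r^{per(\theta)}\Big\}.\] Then \[{\rm Eigen}(\sigma_{\varphi,\mathfrak{w}},V^\Gamma)=\begin{cases} F\setminus\{0\}, & W(\varphi)\not\subseteq \downarrow\mathfrak{Z},\ \Gamma=\varphi(\Gamma\setminus\mathfrak{Z}),\\ F, & W(\varphi)\not\subseteq\downarrow\mathfrak{Z},\ \Gamma\neq\varphi(\Gamma\setminus\mathfrak{Z}),\\ \mathsf{M}, & W(\varphi)\subseteq \downarrow\mathfrak{Z},\ \Gamma=\varphi(\Gamma\setminus\mathfrak{Z}),\\ \mathsf{M}\cup\{0\}, & W(\varphi)\subseteq\downarrow\mathfrak{Z},\ \Gamma\neq\varphi(\Gamma\setminus\mathfrak{Z}). \end{cases}\]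
   Context: For a linear map $T:W\to W$ on an $F$-vector space $W$, ${\rm Eigen}(T,W)$ is the set of all $r\in F$ such that $T(x)=rx$ for some nonzero $x\in W$. $\mathfrak{Z}:=\{\alpha\in\Gamma:\mathfrak{w}_\alpha=0\}$ and $\downarrow\mathfrak{Z}:=\bigcup_{n\geq0}\varphi^{-n}(\mathfrak{Z})$ (with $\varphi^0$ the identity). A point $a\in\Gamma$ is wandering if the sequence $(\varphi^n(a))_{n\geq1}$ is one-to-one; $W(\varphi)$ is the set of wandering points. $a$ is periodic if $\varphi^n(a)=a$ for some $n\geq1$; $P(\varphi)$ is the set of periodic points, and for $\alpha\in P(\varphi)$, $per(\alpha)=\min\{n\geq1:\varphi^n(\alpha)=\alpha\}$. *)

theory Defs
  imports Main "HOL.Vector_Spaces" "HOL-Library.Function_Algebras"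
begin

definition Eigen :: "('f \<Rightarrow> 'w::zero \<Rightarrow> 'w) \<Rightarrow> ('w \<Rightarrow> 'w) \<Rightarrow> 'f set" where
  "Eigen scaleW T = {r. \<exists>x. x \<noteq> 0 \<and> T x = scaleW r x}"

definition fscale :: "('f \<Rightarrow> 'v \<Rightarrow> 'v) \<Rightarrow> 'f \<Rightarrow> ('a \<Rightarrow> 'v) \<Rightarrow> ('a \<Rightarrow> 'v)" where
  "fscale scale r x = (\<lambda>\<alpha>. scale r (x \<alpha>))"

definition wshift :: "('f \<Rightarrow> 'v \<Rightarrow> 'v) \<Rightarrow> ('a \<Rightarrow> 'a) \<Rightarrow> ('a \<Rightarrow> 'f) \<Rightarrow> ('a \<Rightarrow> 'v) \<Rightarrow> ('a \<Rightarrow> 'v)" where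
  "wshift scale \<phi> w x = (\<lambda>\<alpha>. scale (w \<alpha>) (x (\<phi> \<alpha>)))"

definition Zset :: "('a \<Rightarrow> 'f::zero) \<Rightarrow> 'a set" where
  "Zset w = {\<alpha>. w \<alpha> = 0}"

definition downZ :: "('a \<Rightarrow> 'a) \<Rightarrow> ('a \<Rightarrow> 'f::zero) \<Rightarrow> 'a set" where
  "downZ \<phi> w = (\<Union>n::nat. (\<phi> ^^ n) -` Zset w)"

definition wandering :: "('a \<Rightarrow> 'a) \<Rightarrow> 'a set" where
  "wandering \<phi> = {a. inj (\<lambda>n::nat. (\<phi> ^^ Suc n) a)}"

definition periodic :: "('a \<Rightarrow> 'a) \<Rightarrow> 'a set" where
  "periodic \<phi> = {a. \<exists>n::nat. n \<ge> 1 \<and> (\<phi> ^^ n) a = a}"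

definition per :: "('a \<Rightarrow> 'a) \<Rightarrow> 'a \<Rightarrow> nat" where
  "per \<phi> a = (LEAST n::nat. n \<ge> 1 \<and> (\<phi> ^^ n) a = a)"

definition Mset :: "('a \<Rightarrow> 'a) \<Rightarrow> ('a \<Rightarrow> 'f::field) \<Rightarrow> 'f set" where
  "Mset \<phi> w = {r. r \<noteq> 0 \<and> (\<exists>\<theta> \<in> periodic \<phi> - downZ \<phi> w.
      (\<Prod>i<per \<phi> \<theta>. w ((\<phi> ^^ i) \<theta>)) = r ^ per \<phi> \<theta>)}"

end

theory Submission
  imports Defs
begin


lemma fpS: "(f ^^ n) (f x) = f ((f ^^ n) x)"
  by (induct n) auto

lemma L1:
  fixes \<phi> :: "'a \<Rightarrow> 'a" and w c :: "_ \<Rightarrow> 'f::field"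
  assumes r: "r \<noteq> 0" and c0: "c 0 \<noteq> 0"
    and cons: "\<And>j k. (\<phi>^^j) s = (\<phi>^^k) s \<Longrightarrow> c j = c k"
    and step: "\<And>k. w ((\<phi>^^k) s) * c (Suc k) = r * c k"
  shows "\<exists>g. g s \<noteq> 0 \<and> (\<forall>\<alpha>. w \<alpha> * g (\<phi> \<alpha>) = r * g \<alpha>)"
proof -
  define Q where "Q \<alpha> n \<longleftrightarrow> (\<exists>k. (\<phi>^^n) \<alpha> = (\<phi>^^k) s)" for \<alpha> n
  define N where "N \<alpha> = (LEAST n. Q \<alpha> n)" for \<alpha>
  define K where "K \<alpha> = (SOME k. (\<phi>^^N \<alpha>) \<alpha> = (\<phi>^^k) s)" for \<alpha>
  define g where "g \<alpha> = (if \<exists>n. Q \<alpha> n then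
      ((\<Prod>i<N \<alpha>. w ((\<phi>^^i) \<alpha>)) / r^(N \<alpha>)) * c (K \<alpha>) else 0)" for \<alpha>
  have Qsuc: "Q \<alpha> (Suc n) \<longleftrightarrow> Q (\<phi> \<alpha>) n" for \<alpha> n
    unfolding Q_def by (simp only: funpow_Suc_right o_apply)
  have Qstep: "Q (\<phi> \<alpha>) 0" if "Q \<alpha> 0" for \<alpha>
  proof -
    from that obtain k where "\<alpha> = (\<phi>^^k) s" unfolding Q_def by auto
    hence "(\<phi>^^0) (\<phi> \<alpha>) = (\<phi>^^Suc k) s" by simp
    thus ?thesis unfolding Q_def by blast
  qed
  have Qstep2: "Q (\<phi> \<alpha>) n" if "Q \<alpha> n" for \<alpha> n
  proof -
    from that obtain k where "(\<phi>^^n) \<alpha> = (\<phi>^^k) s" unfolding Q_def by auto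
    hence "(\<phi>^^n) (\<phi> \<alpha>) = (\<phi>^^Suc k) s" by (simp add: fpS)
    thus ?thesis unfolding Q_def by blast
  qed
  have QN: "Q \<alpha> (N \<alpha>)" if "\<exists>n. Q \<alpha> n" for \<alpha>
    using that unfolding N_def by (meson LeastI_ex)
  have KN: "(\<phi>^^N \<alpha>) \<alpha> = (\<phi>^^K \<alpha>) s" if "\<exists>n. Q \<alpha> n" for \<alpha>
    using QN[OF that] unfolding K_def Q_def by (rule someI_ex)
  have "Q s 0" unfolding Q_def by (rule exI[of _ 0]) simp
  hence Ns: "N s = 0" unfolding N_def by simp
  have "g s = c (K s)" using \<open>Q s 0\<close> Ns by (auto simp: g_def)
  also have "\<dots> = c 0" using KN[of s] \<open>Q s 0\<close> Ns by (intro cons) (metis funpow_0)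
  finally have gs: "g s \<noteq> 0" using c0 by simp
  have "w \<alpha> * g (\<phi> \<alpha>) = r * g \<alpha>" for \<alpha>
  proof (cases "\<exists>n. Q \<alpha> n")
    case False
    hence "\<not> (\<exists>n. Q (\<phi> \<alpha>) n)" using Qsuc by blast
    with False show ?thesis by (simp add: g_def)
  next
    case True
    hence T2: "\<exists>n. Q (\<phi> \<alpha>) n" using Qstep2 by blast
    show ?thesis
    proof (cases "N \<alpha>")
      case 0
      have a: "\<alpha> = (\<phi>^^K \<alpha>) s" using KN[OF True] 0 by simp
      have "Q \<alpha> 0" using QN[OF True] 0 by simp
      hence "Q (\<phi> \<alpha>) 0" by (rule Qstep)
      hence N0: "N (\<phi> \<alpha>) = 0" unfolding N_def by simp
      have "(\<phi>^^K (\<phi> \<alpha>)) s = \<phi> \<alpha>" using KN[OF T2] N0 by simp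
      also have "\<dots> = (\<phi>^^Suc (K \<alpha>)) s" using a by (metis funpow.simps(2) o_apply)
      finally have "c (K (\<phi> \<alpha>)) = c (Suc (K \<alpha>))" by (rule cons)
      then show ?thesis using 0 N0 True T2 step[of "K \<alpha>"] a by (simp add: g_def)
    next
      case (Suc m)
      have Qm: "Q (\<phi> \<alpha>) m" using QN[OF True] Suc Qsuc by simp
      have Nle: "N (\<phi> \<alpha>) \<le> m" unfolding N_def using Qm by (rule Least_le)
      have Nm: "N (\<phi> \<alpha>) = m"
      proof (rule ccontr)
        assume "N (\<phi> \<alpha>) \<noteq> m"
        hence lt: "Suc (N (\<phi> \<alpha>)) < N \<alpha>" using Nle Suc by simp
        have "Q \<alpha> (Suc (N (\<phi> \<alpha>)))" using QN[OF T2] Qsuc by simp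
        thus False using lt unfolding N_def by (meson not_less_Least)
      qed
      have "(\<phi>^^K (\<phi> \<alpha>)) s = (\<phi>^^m) (\<phi> \<alpha>)" using KN[OF T2] Nm by simp
      also have "\<dots> = (\<phi>^^N \<alpha>) \<alpha>" using Suc by (simp only: funpow_Suc_right o_apply)
      also have "\<dots> = (\<phi>^^K \<alpha>) s" using KN[OF True] .
      finally have cK: "c (K (\<phi> \<alpha>)) = c (K \<alpha>)" by (rule cons)
      have pr: "(\<Prod>i<Suc m. w ((\<phi>^^i) \<alpha>)) = w \<alpha> * (\<Prod>i<m. w ((\<phi>^^i) (\<phi> \<alpha>)))"
        by (simp only: prod.lessThan_Suc_shift funpow_Suc_right o_apply funpow_0)
      have "w \<alpha> * g (\<phi> \<alpha>) = w \<alpha> * ((\<Prod>i<m. w ((\<phi>^^i) (\<phi> \<alpha>))) / r^m) * c (K \<alpha>)"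
        using T2 Nm cK by (simp add: g_def)
      also have "\<dots> = r * (((\<Prod>i<Suc m. w ((\<phi>^^i) \<alpha>))) / r^(Suc m) * c (K \<alpha>))"
        unfolding pr using r by (simp add: field_simps)
      also have "\<dots> = r * g \<alpha>" using True Suc by (simp add: g_def)
      finally show ?thesis .
    qed
  qed
  thus ?thesis using gs by blast
qed



lemma per_props:
  assumes "\<theta> \<in> periodic \<phi>"
  shows "per \<phi> \<theta> \<ge> 1" "(\<phi>^^per \<phi> \<theta>) \<theta> = \<theta>"
    "\<And>q. 1 \<le> q \<Longrightarrow> q < per \<phi> \<theta> \<Longrightarrow> (\<phi>^^q) \<theta> \<noteq> \<theta>"
proof -
  have ex: "\<exists>n::nat. n \<ge> 1 \<and> (\<phi> ^^ n) \<theta> = \<theta>" using assms by (simp add: periodic_def)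
  show "per \<phi> \<theta> \<ge> 1" "(\<phi>^^per \<phi> \<theta>) \<theta> = \<theta>"
    using LeastI_ex[OF ex] unfolding per_def by auto
  show "\<And>q. 1 \<le> q \<Longrightarrow> q < per \<phi> \<theta> \<Longrightarrow> (\<phi>^^q) \<theta> \<noteq> \<theta>"
    unfolding per_def using not_less_Least by blast
qed

lemma per_mod:
  assumes "p \<ge> (1::nat)" "(\<phi>^^p) \<theta> = \<theta>"
  shows "(\<phi>^^j) \<theta> = (\<phi>^^(j mod p)) \<theta>"
proof -
  have m: "(\<phi>^^(p*q)) \<theta> = \<theta>" for q
  proof (induct q)
    case (Suc q)
    have "(\<phi>^^(p*Suc q)) \<theta> = (\<phi>^^p) ((\<phi>^^(p*q)) \<theta>)"
      by (simp add: funpow_add)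
    thus ?case using Suc assms by simp
  qed simp
  have "(\<phi>^^j) \<theta> = (\<phi>^^(j mod p + p*(j div p))) \<theta>" by simp
  also have "\<dots> = (\<phi>^^(j mod p)) \<theta>" by (simp only: funpow_add o_apply m)
  finally show ?thesis .
qed

lemma per_inj:
  assumes "\<theta> \<in> periodic \<phi>" "a < per \<phi> \<theta>" "b < per \<phi> \<theta>" "(\<phi>^^a) \<theta> = (\<phi>^^b) \<theta>"
  shows "a = b"
proof -
  note P = per_props[OF assms(1)]
  let ?p = "per \<phi> \<theta>"
  have *: False if "a' < b'" "b' < ?p" "(\<phi>^^a') \<theta> = (\<phi>^^b') \<theta>" for a' b'
  proof -
    have "(\<phi>^^(?p - b' + a')) \<theta> = (\<phi>^^(?p - b')) ((\<phi>^^a') \<theta>)" by (simp add: funpow_add)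
    also have "\<dots> = (\<phi>^^(?p - b')) ((\<phi>^^b') \<theta>)" using that by simp
    also have "\<dots> = (\<phi>^^(?p - b' + b')) \<theta>" by (simp add: funpow_add)
    also have "\<dots> = \<theta>" using that P by simp
    finally have e: "(\<phi>^^(?p - b' + a')) \<theta> = \<theta>" .
    have "1 \<le> ?p - b' + a'" "?p - b' + a' < ?p" using that by linarith+
    thus False using P(3) e by blast
  qed
  show ?thesis using *[of a b] *[of b a] assms by (metis linorder_neqE_nat)
qed

lemma orbit_zero:
  "\<alpha> \<in> downZ \<phi> w \<longleftrightarrow> (\<exists>n. w ((\<phi>^^n) \<alpha>) = 0)"
  by (simp add: downZ_def Zset_def)


lemma fsimp: "(x::'f::field) \<noteq> 0 \<Longrightarrow> y \<noteq> 0 \<Longrightarrow> x * (r * a / (y * x)) = r * (a / y)"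
  by (simp add: field_simps)

lemma seed:
  fixes \<phi> :: "'a \<Rightarrow> 'a" and w :: "_ \<Rightarrow> 'f::field"
  assumes r: "r \<noteq> 0" and nz: "\<And>n. w ((\<phi>^^n) s) \<noteq> 0"
    and cons: "\<And>j k. (\<phi>^^j) s = (\<phi>^^k) s \<Longrightarrow>
      r^j / (\<Prod>i<j. w ((\<phi>^^i) s)) = r^k / (\<Prod>i<k. w ((\<phi>^^i) s))"
  shows "\<exists>g. g s \<noteq> 0 \<and> (\<forall>\<alpha>. w \<alpha> * g (\<phi> \<alpha>) = r * g \<alpha>)"
proof -
  define c where "c k = r^k / (\<Prod>i<k. w ((\<phi>^^i) s))" for k
  have st: "w ((\<phi>^^k) s) * c (Suc k) = r * c k" for k
  proof -
    have P: "(\<Prod>i<k. w ((\<phi>^^i) s)) \<noteq> 0" using nz by (simp add: prod_zero_iff)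
    show ?thesis
      unfolding c_def prod.lessThan_Suc power_Suc using fsimp[OF nz[of k] P] .
  qed
  have c0: "c 0 \<noteq> 0" by (simp add: c_def)
  have cs: "c j = c k" if "(\<phi>^^j) s = (\<phi>^^k) s" for j k
    unfolding c_def using cons[OF that] .
  show ?thesis by (rule L1[OF r c0 cs st])
qed
lemma wander_seed:
  fixes \<phi> :: "'a \<Rightarrow> 'a" and w :: "_ \<Rightarrow> 'f::field"
  assumes r: "r \<noteq> 0" and a: "a \<in> wandering \<phi>" "a \<notin> downZ \<phi> w"
  shows "\<exists>g. g a \<noteq> 0 \<and> (\<forall>\<alpha>. w \<alpha> * g (\<phi> \<alpha>) = r * g \<alpha>)"
proof (rule seed[OF r])
  show "\<And>n. w ((\<phi>^^n) a) \<noteq> 0" using a(2) by (simp add: orbit_zero)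
  fix j k assume "(\<phi>^^j) a = (\<phi>^^k) a"
  hence "(\<phi>^^Suc j) a = (\<phi>^^Suc k) a" by simp
  hence "j = k" using a(1) unfolding wandering_def by (auto dest: injD)
  thus "r^j / (\<Prod>i<j. w ((\<phi>^^i) a)) = r^k / (\<Prod>i<k. w ((\<phi>^^i) a))" by simp
qed

lemma periodic_seed:
  fixes \<phi> :: "'a \<Rightarrow> 'a" and w :: "_ \<Rightarrow> 'f::field"
  assumes "r \<in> Mset \<phi> w"
  shows "\<exists>g. (\<exists>s. g s \<noteq> 0) \<and> (\<forall>\<alpha>. w \<alpha> * g (\<phi> \<alpha>) = r * g \<alpha>)"
proof -
  from assms obtain \<theta> where r: "r \<noteq> 0" and th: "\<theta> \<in> periodic \<phi>" "\<theta> \<notin> downZ \<phi> w"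
    and pr: "(\<Prod>i<per \<phi> \<theta>. w ((\<phi> ^^ i) \<theta>)) = r ^ per \<phi> \<theta>"
    unfolding Mset_def by blast
  let ?p = "per \<phi> \<theta>"
  note PP = per_props[OF th(1)]
  have nz: "\<And>n. w ((\<phi>^^n) \<theta>) \<noteq> 0" using th(2) by (simp add: orbit_zero)
  define P where "P k = (\<Prod>i<k. w ((\<phi>^^i) \<theta>))" for k
  define c where "c k = r^k / P k" for k
  have Pp: "P (k + ?p) = P k * r^?p" for k
  proof (induct k)
    case 0 then show ?case using pr by (simp add: P_def)
  next
    case (Suc k)
    have "(\<phi>^^(k + ?p)) \<theta> = (\<phi>^^k) \<theta>" using PP by (simp add: funpow_add)
    then show ?case using Suc by (simp add: P_def)
  qed
  have Pnz: "P k \<noteq> 0" for k using nz by (simp add: P_def prod_zero_iff)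
  have cp: "c (k + ?p) = c k" for k
    using Pp[of k] Pnz[of k] r unfolding c_def by (simp add: power_add)
  have cq: "c (k + ?p * q) = c k" for k q
  proof (induct q)
    case (Suc q)
    have "c (k + ?p * Suc q) = c ((k + ?p * q) + ?p)" by (simp add: algebra_simps)
    then show ?case using cp Suc by simp
  qed simp
  have cmod: "c j = c (j mod ?p)" for j
    using cq[of "j mod ?p" "j div ?p"] by simp
  have "\<exists>g. g \<theta> \<noteq> 0 \<and> (\<forall>\<alpha>. w \<alpha> * g (\<phi> \<alpha>) = r * g \<alpha>)"
  proof (rule seed[where s=\<theta> and \<phi>=\<phi> and w=w, OF r nz])
    fix j k assume e: "(\<phi>^^j) \<theta> = (\<phi>^^k) \<theta>"
    have "(\<phi>^^(j mod ?p)) \<theta> = (\<phi>^^(k mod ?p)) \<theta>"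
      using e per_mod[OF PP(1,2)] by metis
    hence "j mod ?p = k mod ?p" using per_inj[OF th(1)] PP(1) by simp
    hence "c j = c k" using cmod by metis
    thus "r^j / (\<Prod>i<j. w ((\<phi>^^i) \<theta>)) = r^k / (\<Prod>i<k. w ((\<phi>^^i) \<theta>))"
      by (simp add: c_def P_def)
  qed
  thus ?thesis by blast
qed



theorem theorem2p9:
  fixes scale :: "'f::field \<Rightarrow> 'v::ab_group_add \<Rightarrow> 'v"
    and \<phi> :: "'a \<Rightarrow> 'a" and w :: "'a \<Rightarrow> 'f"
  assumes "Vector_Spaces.vector_space scale"
    and "\<exists>v::'v. v \<noteq> 0"
  shows "Eigen (fscale scale :: 'f \<Rightarrow> ('a \<Rightarrow> 'v) \<Rightarrow> ('a \<Rightarrow> 'v)) (wshift scale \<phi> w) =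
    (if \<not> wandering \<phi> \<subseteq> downZ \<phi> w then
       (if UNIV = \<phi> ` (UNIV - Zset w) then UNIV - {0} else UNIV)
     else
       (if UNIV = \<phi> ` (UNIV - Zset w) then Mset \<phi> w else Mset \<phi> w \<union> {0}))"
proof -
  interpret vs: vector_space scale by fact
  obtain v :: 'v where v: "v \<noteq> 0" using assms(2) by blast
  let ?E = "Eigen (fscale scale :: 'f \<Rightarrow> ('a \<Rightarrow> 'v) \<Rightarrow> ('a \<Rightarrow> 'v)) (wshift scale \<phi> w)"
  have memE: "r \<in> ?E \<longleftrightarrow> (\<exists>x::'a\<Rightarrow>'v. (\<exists>\<alpha>. x \<alpha> \<noteq> 0) \<and>
      (\<forall>\<alpha>. scale (w \<alpha>) (x (\<phi> \<alpha>)) = scale r (x \<alpha>)))" for r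
    unfolding Eigen_def fscale_def wshift_def fun_eq_iff by (auto simp: zero_fun_def)
  have vec: "r \<in> ?E" if "g s \<noteq> 0" "\<forall>\<alpha>. w \<alpha> * g (\<phi> \<alpha>) = r * g \<alpha>" for r g s
    unfolding memE
  proof (intro exI conjI allI)
    show "scale (g s) v \<noteq> 0" using that v by simp
    fix \<alpha>
    show "scale (w \<alpha>) (scale (g (\<phi> \<alpha>)) v) = scale r (scale (g \<alpha>) v)"
      using that by (simp add: vs.scale_scale)
  qed
  have F0: "0 \<in> ?E \<longleftrightarrow> UNIV \<noteq> \<phi> ` (UNIV - Zset w)"
  proof
    assume "0 \<in> ?E"
    then obtain x :: "'a \<Rightarrow> 'v" and \<beta> where x: "x \<beta> \<noteq> 0" "\<forall>\<alpha>. scale (w \<alpha>) (x (\<phi> \<alpha>)) = 0"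
      unfolding memE by auto
    have "\<beta> \<notin> \<phi> ` (UNIV - Zset w)"
    proof
      assume "\<beta> \<in> \<phi> ` (UNIV - Zset w)"
      then obtain \<alpha> where "\<phi> \<alpha> = \<beta>" "w \<alpha> \<noteq> 0" by (auto simp: Zset_def)
      thus False using x(2)[rule_format, of \<alpha>] x(1) by simp
    qed
    thus "UNIV \<noteq> \<phi> ` (UNIV - Zset w)" by blast
  next
    assume "UNIV \<noteq> \<phi> ` (UNIV - Zset w)"
    then obtain \<beta> where b: "\<beta> \<notin> \<phi> ` (UNIV - Zset w)" by blast
    have "w \<alpha> * (if \<phi> \<alpha> = \<beta> then 1 else 0) = 0 * (if \<alpha> = \<beta> then 1 else (0::'f))" for \<alpha>
      using b by (auto simp: Zset_def)
    thus "0 \<in> ?E" by (intro vec[of "\<lambda>\<alpha>. if \<alpha> = \<beta> then 1 else 0" \<beta>]) auto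
  qed
  have F1: "r \<in> ?E" if "r \<noteq> 0" "\<not> wandering \<phi> \<subseteq> downZ \<phi> w" for r
  proof -
    from that obtain a where "a \<in> wandering \<phi>" "a \<notin> downZ \<phi> w" by blast
    from wander_seed[OF that(1) this] show ?thesis using vec by blast
  qed
  have F2: "r \<in> ?E" if "r \<in> Mset \<phi> w" for r
    using periodic_seed[OF that] vec by blast
  have F3: "\<not> wandering \<phi> \<subseteq> downZ \<phi> w \<or> r \<in> Mset \<phi> w" if r: "r \<noteq> 0" "r \<in> ?E" for r
  proof -
    from that obtain x :: "'a \<Rightarrow> 'v" and \<alpha> where x: "x \<alpha> \<noteq> 0"
      and eq: "\<And>\<beta>. scale (w \<beta>) (x (\<phi> \<beta>)) = scale r (x \<beta>)"
      unfolding memE by auto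
    have one: "w \<beta> \<noteq> 0 \<and> x (\<phi> \<beta>) \<noteq> 0" if "x \<beta> \<noteq> 0" for \<beta>
      using eq[of \<beta>] that r(1) by (metis vs.scale_eq_0_iff)
    have xn: "x ((\<phi>^^n) \<alpha>) \<noteq> 0" for n
      by (induct n) (use x one in auto)
    have wn: "w ((\<phi>^^n) \<alpha>) \<noteq> 0" for n using one xn by blast
    have iter: "scale (r^k) (x \<beta>) = scale (\<Prod>i<k. w ((\<phi>^^i) \<beta>)) (x ((\<phi>^^k) \<beta>))" for k \<beta>
    proof (induct k)
      case (Suc k)
      have "scale (r^Suc k) (x \<beta>) = scale r (scale (r^k) (x \<beta>))" by (simp add: vs.scale_scale)
      also have "\<dots> = scale (\<Prod>i<k. w ((\<phi>^^i) \<beta>)) (scale r (x ((\<phi>^^k) \<beta>)))"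
        unfolding Suc by (simp add: vs.scale_scale mult.commute)
      also have "\<dots> = scale (\<Prod>i<k. w ((\<phi>^^i) \<beta>)) (scale (w ((\<phi>^^k) \<beta>)) (x ((\<phi>^^Suc k) \<beta>)))"
        using eq[of "(\<phi>^^k) \<beta>"] by simp
      also have "\<dots> = scale (\<Prod>i<Suc k. w ((\<phi>^^i) \<beta>)) (x ((\<phi>^^Suc k) \<beta>))"
        by (simp add: vs.scale_scale)
      finally show ?case .
    qed simp
    have anz: "\<alpha> \<notin> downZ \<phi> w" using wn by (simp add: orbit_zero)
    show ?thesis
    proof (cases "\<alpha> \<in> wandering \<phi>")
      case True then show ?thesis using anz by blast
    next
      case False
      then obtain m n where mn: "m \<noteq> n" "(\<phi>^^Suc m) \<alpha> = (\<phi>^^Suc n) \<alpha>"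
        unfolding wandering_def inj_def by blast
      then obtain m n where mn: "m < n" "(\<phi>^^Suc m) \<alpha> = (\<phi>^^Suc n) \<alpha>"
        by (metis linorder_neqE_nat)
      define \<theta> where "\<theta> = (\<phi>^^Suc m) \<alpha>"
      have th_it: "(\<phi>^^j) \<theta> = (\<phi>^^(j + Suc m)) \<alpha>" for j
        by (simp only: \<theta>_def funpow_add o_apply)
      have "(\<phi>^^(n - m)) \<theta> = \<theta>"
        unfolding th_it using mn by (simp add: \<theta>_def)
      hence thp: "\<theta> \<in> periodic \<phi>" unfolding periodic_def using mn(1)
        by (intro CollectI exI[of _ "n - m"]) simp
      have thz: "\<theta> \<notin> downZ \<phi> w" unfolding orbit_zero th_it using wn by blast
      note PP = per_props[OF thp]
      have xt: "x \<theta> \<noteq> 0" using xn \<theta>_def by blast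
      have "scale (r^per \<phi> \<theta>) (x \<theta>) = scale (\<Prod>i<per \<phi> \<theta>. w ((\<phi>^^i) \<theta>)) (x \<theta>)"
        using iter[of "per \<phi> \<theta>" \<theta>] PP(2) by simp
      hence "(\<Prod>i<per \<phi> \<theta>. w ((\<phi>^^i) \<theta>)) = r^per \<phi> \<theta>" using xt by simp
      hence "r \<in> Mset \<phi> w" unfolding Mset_def using r(1) thp thz by blast
      thus ?thesis by blast
    qed
  qed
  have M0: "0 \<notin> Mset \<phi> w" by (simp add: Mset_def)
  show ?thesis
  proof (cases "wandering \<phi> \<subseteq> downZ \<phi> w")
    case False
    have A: "r \<in> ?E" if "r \<noteq> 0" for r using F1 False that by blast
    show ?thesis
    proof (cases "UNIV = \<phi> ` (UNIV - Zset w)")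
      case True
      hence "0 \<notin> ?E" using F0 by blast
      hence "?E = UNIV - {0}" using A by (intro set_eqI) (metis Diff_iff UNIV_I singleton_iff)
      thus ?thesis using True False by simp
    next
      case T2: False
      hence "0 \<in> ?E" using F0 by blast
      hence "?E = UNIV" using A by (metis UNIV_eq_I)
      thus ?thesis using T2 False by simp
    qed
  next
    case True
    have B: "r \<in> ?E \<longleftrightarrow> r \<in> Mset \<phi> w" if "r \<noteq> 0" for r
      using F2 F3 True that by blast
    show ?thesis
    proof (cases "UNIV = \<phi> ` (UNIV - Zset w)")
      case T1: True
      hence "0 \<notin> ?E" using F0 by blast
      hence "?E = Mset \<phi> w" using B M0 by (intro set_eqI) (metis)
      thus ?thesis using T1 True by simp
    next
      case T2: False
      hence "0 \<in> ?E" using F0 by blast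
      hence "?E = Mset \<phi> w \<union> {0}" using B M0 by (intro set_eqI) (metis Un_iff singleton_iff)
      thus ?thesis using T2 True by simp
    qed
  qed
qed


end
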